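(* Let $(G=(V,E),(p_e)_{e\in E})$ be an instance of the Independent Cascade (IC) model, let $k\in\mathbb{Z}^+$ and $d\in\mathbb{Z}^+$. Let $\pi_g$ be the greedy policy, and let $\alpha(T_g)$ be the regret ratio of the $(\pi_g,k,d)$-process (both defined in the context). Then for every policy $\pi_*$, \[F(\pi_g,k,d)\ \ge\ \big(1-e^{-1/\alpha(T_g)}\big)\cdot F(\pi_*,k,d).\]
   Context: IC model: a directed graph $G=(V,E)$ with a probability $p_e\in(0,1]$ on each edge. Each edge is independently live with probability $p_e$ and dead otherwise. Diffusion proceeds in rounds: in each round every node activated in the previous round (seed nodes count as activated when seeded) attempts to activate each inactive out-neighbor $u$ along edge $(v,u)$, succeeding iff the edge is live; the state (live/dead) of each attempted edge thereby becomes observed. A realization is a pair $\phi=(L(\phi),D(\phi))$ of disjoint subsets of $E$ (observed live and observed dead edges); it is full if $L(\phi)\cup D(\phi)=E$; $\Psi$ denotes the set of full realizations, $\phi_\emptyset=(\emptyset,\emptyset)$. $\phi_1\prec\phi_2$ means $L(\phi_1)\subseteq L(\phi_2)$ and $D(\phi_1)\subseteq D(\phi_2)$, and $\Pr[\phi_2\mid\phi_1]=\prod_{e\in L(\phi_2)\setminus L(\phi_1)}p_e\prod_{e\in D(\phi_2)\setminus D(\phi_1)}(1-p_e)$; $\Pr[\phi]=\Pr[\phi\mid\phi_\emptyset]$. A status is a pair $U=(\dot S(U),\dot\phi(U))$ of a set of currently active nodes and a realization of the observed edges. For $S\subseteq V$, full $\psi$ and $t\in\mathbb{Z}^+\cup\{\infty\}$,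 $A_t(S,\psi)$ is the set of nodes $v$ such that some node of $S$ reaches $v$ via a path of at most $t$ edges (any length if $t=\infty$) all in $L(\psi)$. Define $\Delta_t(S,V^*,\psi)=|A_t(S\cup V^*,\psi)|-|A_t(S,\psi)|$ and $\Delta f_t(S,V^*,\phi)=\sum_{\psi\in\Psi,\ \phi\prec\psi}\Pr[\psi\mid\phi]\,\Delta_t(S,V^*,\psi)$. A policy $\pi$ maps each status $(S,\phi)$ to a single node $\pi(S,\phi)\in V$. The $(\pi,k,d)$-process: set $(S,\phi)=(\emptyset,\phi_\emptyset)$; repeat $k$ times: (seeding step) select and activate the node $\pi(S,\phi)$; (observing step) observe the diffusion for $d$ rounds (waiting a round is allowed even if nothing can spread) and update $S$ to the set of currently active nodes and $\phi$ to the currently observed realization. Finally let the diffusion run until it terminates. $F(\pi,k,d)$ is the expected number of active nodes at the end. The greedy policy is $\pi_g(S,\phi)\in\arg\max_{v\in V}\Delta f_\infty(S,\{v\},\phi)$. For a status $U$, let $\dot{\mathcal U}_\infty(U)$ be the set of possible statuses reached when, starting from $U$, the diffusion continues without new seeds until it terminates (each with probability $\Pr[\dot\phi(U_* )\mid\dot\phi(U)]$). Define \[\alpha_{\infty,\infty}(U)=\frac{\sum_{U_*\in\dot{\mathcal U}_\infty(U)}\Pr[\dot\phi(U_* )\mid\dot\phi(U)]\max_v\Delta f_\infty(\dot S(U_* ),\{v\},\dot\phi(U_* ))}{\max_v\Delta f_\infty(\dot S(U),\{v\},\dot\phi(U))}.\] $\alpha(T_g)$ is the maximum of $\alpha_{\infty,\infty}(U)$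 over all statuses $U$ that appear in the decision tree $T_g$ of the $(\pi_g,k,d)$-process, i.e., over the initial status $(\emptyset,\phi_\emptyset)$ and every status that can be observed (with positive probability) at a seeding step of that process. *)

theory Defs
  imports Complex_Main
begin

text \<open>IC model on a finite directed graph whose vertex set is the whole (finite) type 'v.  A realization is a pair (L,D) of
  observed live / observed dead edges; a status is a pair (S, phi).\<close>

type_synonym 'v edge = "'v \<times> 'v"
type_synonym 'v realization = "'v edge set \<times> 'v edge set"
type_synonym 'v status = "'v set \<times> 'v realization"
type_synonym 'v policy = "'v set \<Rightarrow> 'v realization \<Rightarrow> 'v"

definition is_realization :: "'v edge set \<Rightarrow> 'v realization \<Rightarrow> bool" where
  "is_realization E phi \<longleftrightarrow> fst phi \<subseteq> E \<and> snd phi \<subseteq> E \<and> fst phi \<inter> snd phi = {}"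

definition full_realizations :: "'v edge set \<Rightarrow> 'v realization set" where
  "full_realizations E = {phi. is_realization E phi \<and> fst phi \<union> snd phi = E}"

definition prec :: "'v realization \<Rightarrow> 'v realization \<Rightarrow> bool" where
  "prec phi1 phi2 \<longleftrightarrow> fst phi1 \<subseteq> fst phi2 \<and> snd phi1 \<subseteq> snd phi2"

definition cond_prob :: "('v edge \<Rightarrow> real) \<Rightarrow> 'v realization \<Rightarrow> 'v realization \<Rightarrow> real" where
  "cond_prob p phi2 phi1 =
     (\<Prod>e\<in>fst phi2 - fst phi1. p e) * (\<Prod>e\<in>snd phi2 - snd phi1. 1 - p e)"

definition real_prob :: "('v edge \<Rightarrow> real) \<Rightarrow> 'v realization \<Rightarrow> real" where
  "real_prob p phi = cond_prob p phi ({}, {})"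

definition reach_inf :: "'v set \<Rightarrow> 'v realization \<Rightarrow> 'v set" where
  "reach_inf S psi = {v. \<exists>s\<in>S. (s, v) \<in> (fst psi)\<^sup>*}"

definition Delta_inf :: "'v set \<Rightarrow> 'v set \<Rightarrow> 'v realization \<Rightarrow> real" where
  "Delta_inf S Vs psi = real (card (reach_inf (S \<union> Vs) psi)) - real (card (reach_inf S psi))"

definition Delta_f_inf :: "'v edge set \<Rightarrow> ('v edge \<Rightarrow> real) \<Rightarrow> 'v set \<Rightarrow> 'v set \<Rightarrow> 'v realization \<Rightarrow> real" where
  "Delta_f_inf E p S Vs phi =
     (\<Sum>psi\<in>{psi \<in> full_realizations E. prec phi psi}. cond_prob p psi phi * Delta_inf S Vs psi)"

definition max_gain :: "'v::finite edge set \<Rightarrow> ('v edge \<Rightarrow> real) \<Rightarrow> 'v status \<Rightarrow> real" where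
  "max_gain E p U = Max (range (\<lambda>v. Delta_f_inf E p (fst U) {v} (snd U)))"

definition is_greedy :: "'v::finite edge set \<Rightarrow> ('v edge \<Rightarrow> real) \<Rightarrow> 'v policy \<Rightarrow> bool" where
  "is_greedy E p pol \<longleftrightarrow>
     (\<forall>S phi. Delta_f_inf E p S {pol S phi} phi = max_gain E p (S, phi))"

text \<open>Nodes activated in the
  previous round (including seeds) are exactly the active nodes that still have
  unobserved out-edges to inactive nodes; so one round attempts precisely the
  unobserved edges from active to inactive nodes.\<close>
definition diff_round :: "'v edge set \<Rightarrow> 'v edge set \<Rightarrow> 'v status \<Rightarrow> 'v status" where
  "diff_round E Lt U =
     (let S = fst U; L = fst (snd U); D = snd (snd U);
          A = {e \<in> E. fst e \<in> S \<and> snd e \<notin> S \<and> e \<notin> L \<and> e \<notin> D}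
      in (S \<union> snd ` (A \<inter> Lt), (L \<union> (A \<inter> Lt), D \<union> (A - Lt))))"

definition seed_step :: "'v edge set \<Rightarrow> 'v edge set \<Rightarrow> 'v policy \<Rightarrow> nat \<Rightarrow> 'v status \<Rightarrow> 'v status" where
  "seed_step E Lt pol d U = (diff_round E Lt ^^ d) (fst U \<union> {pol (fst U) (snd U)}, snd U)"

definition proc_status :: "'v edge set \<Rightarrow> 'v edge set \<Rightarrow> 'v policy \<Rightarrow> nat \<Rightarrow> nat \<Rightarrow> 'v status" where
  "proc_status E Lt pol d i = (seed_step E Lt pol d ^^ i) ({}, ({}, {}))"

text \<open>Running the diffusion until it terminates: CARD('v) rounds always suffice.\<close>
definition run_to_end :: "'v::finite edge set \<Rightarrow> 'v edge set \<Rightarrow> 'v status \<Rightarrow> 'v status" where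
  "run_to_end E Lt U = (diff_round E Lt ^^ card (UNIV :: 'v set)) U"

definition F_val :: "'v::finite edge set \<Rightarrow> ('v edge \<Rightarrow> real) \<Rightarrow> 'v policy \<Rightarrow> nat \<Rightarrow> nat \<Rightarrow> real" where
  "F_val E p pol k d =
     (\<Sum>psi\<in>full_realizations E.
        real_prob p psi * real (card (fst (run_to_end E (fst psi) (proc_status E (fst psi) pol d k)))))"

definition final_statuses :: "'v::finite edge set \<Rightarrow> 'v status \<Rightarrow> 'v status set" where
  "final_statuses E U = {run_to_end E (fst psi) U | psi. psi \<in> full_realizations E \<and> prec (snd U) psi}"

definition alpha_inf :: "'v::finite edge set \<Rightarrow> ('v edge \<Rightarrow> real) \<Rightarrow> 'v status \<Rightarrow> real" where
  "alpha_inf E p U =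
     (\<Sum>U'\<in>final_statuses E U. cond_prob p (snd U') (snd U) * max_gain E p U') / max_gain E p U"

definition tree_statuses :: "'v edge set \<Rightarrow> ('v edge \<Rightarrow> real) \<Rightarrow> 'v policy \<Rightarrow> nat \<Rightarrow> nat \<Rightarrow> 'v status set" where
  "tree_statuses E p pol k d =
     {proc_status E (fst psi) pol d i | psi i. psi \<in> full_realizations E \<and> real_prob p psi > 0 \<and> i < k}"

definition alpha_tree :: "'v::finite edge set \<Rightarrow> ('v edge \<Rightarrow> real) \<Rightarrow> 'v policy \<Rightarrow> nat \<Rightarrow> nat \<Rightarrow> real" where
  "alpha_tree E p pol k d = Max (alpha_inf E p ` tree_statuses E p pol k d)"

end

theory Submission
  imports Defs
begin


definition W :: "('e \<Rightarrow> real) \<Rightarrow> 'e set \<Rightarrow> 'e set \<Rightarrow> real" where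
  "W p B m = (\<Prod>e\<in>m. p e) * (\<Prod>e\<in>B - m. 1 - p e)"

lemma W_sum1: "finite B \<Longrightarrow> (\<Sum>m\<in>Pow B. W p B m) = 1"
  using prod_add[of B p "\<lambda>e. 1 - p e"] by (simp add: W_def)

lemma W_split:
  assumes "finite E" "Ob \<subseteq> E" "L \<subseteq> E"
  shows "W p E L = W p Ob (L \<inter> Ob) * W p (E - Ob) (L - Ob)"
proof -
  have f: "finite L" "finite (E - L)" using assms finite_subset by auto
  have 1: "(\<Prod>e\<in>L. p e) = (\<Prod>e\<in>L \<inter> Ob. p e) * (\<Prod>e\<in>L - Ob. p e)"
    using prod.Int_Diff[OF f(1)] by blast
  have 2: "(\<Prod>e\<in>E - L. 1 - p e) = (\<Prod>e\<in>(E - L) \<inter> Ob. 1 - p e) * (\<Prod>e\<in>(E - L) - Ob. 1 - p e)"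
    using prod.Int_Diff[OF f(2)] by blast
  have 3: "(E - L) \<inter> Ob = Ob - L \<inter> Ob" "(E - L) - Ob = (E - Ob) - (L - Ob)" using assms by auto
  show ?thesis unfolding W_def 1 2 3 by (simp add: algebra_simps)
qed

lemma W_nonneg: "(\<forall>e\<in>B. 0 \<le> p e \<and> p e \<le> 1) \<Longrightarrow> m \<subseteq> B \<Longrightarrow> 0 \<le> W p B m"
  unfolding W_def by (intro mult_nonneg_nonneg prod_nonneg) auto

lemma sum_Pow_reindex:
  assumes "finite E" "Ob \<subseteq> E" "K \<subseteq> Ob"
  shows "(\<Sum>m\<in>Pow (E - Ob). g (K \<union> m)) = (\<Sum>M\<in>{M\<in>Pow E. M \<inter> Ob = K}. g M)"
proof (rule sum.reindex_bij_betw)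
  show "bij_betw ((\<union>) K) (Pow (E - Ob)) {M \<in> Pow E. M \<inter> Ob = K}"
  proof (rule bij_betw_byWitness[where f' = "\<lambda>M. M - Ob"])
    show "\<forall>a\<in>Pow (E - Ob). K \<union> a - Ob = a" using assms by auto
    show "\<forall>a'\<in>{M \<in> Pow E. M \<inter> Ob = K}. K \<union> (a' - Ob) = a'" by auto
    show "(\<union>) K ` Pow (E - Ob) \<subseteq> {M \<in> Pow E. M \<inter> Ob = K}" using assms by auto
    show "(\<lambda>M. M - Ob) ` {M \<in> Pow E. M \<inter> Ob = K} \<subseteq> Pow (E - Ob)" by auto
  qed
qed

lemma tower:
  fixes Ob :: "'e set \<Rightarrow> 'e set" and c :: "'e set \<Rightarrow> 'c"
  assumes fin: "finite E"
    and OE: "\<And>L. L \<subseteq> E \<Longrightarrow> Ob L \<subseteq> E"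
    and loc: "\<And>L L'. L \<subseteq> E \<Longrightarrow> L' \<subseteq> E \<Longrightarrow> L' \<inter> Ob L = L \<inter> Ob L \<Longrightarrow> Ob L' = Ob L \<and> c L' = c L"
  shows "(\<Sum>L\<in>Pow E. W p E L * (\<Sum>m\<in>Pow (E - Ob L). W p (E - Ob L) m * Z (c L) (L \<inter> Ob L \<union> m)))
       = (\<Sum>L\<in>Pow E. W p E L * Z (c L) L)"
proof -
  define T where "T L M = (if M \<inter> Ob L = L \<inter> Ob L then W p E L * W p (E - Ob L) (M - Ob L) * Z (c L) M else 0)" for L M
  have sym: "T L M = (if L \<inter> Ob M = M \<inter> Ob M then W p E M * W p (E - Ob M) (L - Ob M) * Z (c M) M else 0)"
    if "L \<subseteq> E" "M \<subseteq> E" for L M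
  proof (cases "M \<inter> Ob L = L \<inter> Ob L")
    case True
    with loc[OF that(1,2)] have e: "Ob M = Ob L" "c M = c L" by auto
    have "W p E L * W p (E - Ob L) (M - Ob L) = W p E M * W p (E - Ob M) (L - Ob M)"
      using W_split[OF fin OE[OF that(1)] that(1)] W_split[OF fin OE[OF that(1)] that(2)] e True
      by (simp add: algebra_simps)
    then show ?thesis using True e unfolding T_def by auto
  next
    case False
    have "\<not> (L \<inter> Ob M = M \<inter> Ob M)"
    proof
      assume h: "L \<inter> Ob M = M \<inter> Ob M"
      with loc[OF that(2,1)] have "Ob L = Ob M" by auto
      with h False show False by auto
    qed
    then show ?thesis using False unfolding T_def by auto
  qed
  have lhs: "W p E L * (\<Sum>m\<in>Pow (E - Ob L). W p (E - Ob L) m * Z (c L) (L \<inter> Ob L \<union> m)) = (\<Sum>M\<in>Pow E. T L M)"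
    if "L \<subseteq> E" for L
  proof -
    have "(\<Sum>m\<in>Pow (E - Ob L). W p (E - Ob L) m * Z (c L) (L \<inter> Ob L \<union> m))
        = (\<Sum>m\<in>Pow (E - Ob L). W p (E - Ob L) ((L \<inter> Ob L \<union> m) - Ob L) * Z (c L) (L \<inter> Ob L \<union> m))"
      proof (intro sum.cong refl)
        fix m assume "m \<in> Pow (E - Ob L)"
        then have "(L \<inter> Ob L \<union> m) - Ob L = m" by auto
        then show "W p (E - Ob L) m * Z (c L) (L \<inter> Ob L \<union> m) = W p (E - Ob L) ((L \<inter> Ob L \<union> m) - Ob L) * Z (c L) (L \<inter> Ob L \<union> m)" by simp
      qed
    also have "\<dots> = (\<Sum>M\<in>{M\<in>Pow E. M \<inter> Ob L = L \<inter> Ob L}. W p (E - Ob L) (M - Ob L) * Z (c L) M)"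
      using sum_Pow_reindex[OF fin OE[OF that], of "L \<inter> Ob L" "\<lambda>M. W p (E - Ob L) (M - Ob L) * Z (c L) M"]
      by auto
    finally show ?thesis unfolding T_def
      by (simp add: sum_distrib_left sum.inter_filter[symmetric] fin algebra_simps)
  qed
  have rhs: "(\<Sum>L\<in>Pow E. T L M) = W p E M * Z (c M) M" if "M \<subseteq> E" for M
  proof -
    have "(\<Sum>L\<in>Pow E. T L M) = (\<Sum>L\<in>Pow E. if L \<inter> Ob M = M \<inter> Ob M then W p E M * W p (E - Ob M) (L - Ob M) * Z (c M) M else 0)"
      using sym that by (intro sum.cong) auto
    also have "\<dots> = (\<Sum>L\<in>{L\<in>Pow E. L \<inter> Ob M = M \<inter> Ob M}. W p (E - Ob M) (L - Ob M)) * (W p E M * Z (c M) M)"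
      by (simp add: sum.inter_filter[symmetric] fin sum_distrib_right sum_distrib_left algebra_simps)
    also have "(\<Sum>L\<in>{L\<in>Pow E. L \<inter> Ob M = M \<inter> Ob M}. W p (E - Ob M) (L - Ob M)) = (\<Sum>m\<in>Pow (E - Ob M). W p (E - Ob M) (M \<inter> Ob M \<union> m - Ob M))"
      using sum_Pow_reindex[OF fin OE[OF that], of "M \<inter> Ob M" "\<lambda>L. W p (E - Ob M) (L - Ob M)"] by auto
    also have "\<dots> = (\<Sum>m\<in>Pow (E - Ob M). W p (E - Ob M) m)" by (intro sum.cong refl arg_cong[where f="W p (E - Ob M)"]) auto
    also have "\<dots> = 1" using W_sum1 fin by auto
    finally show ?thesis by simp
  qed
  have "(\<Sum>L\<in>Pow E. W p E L * (\<Sum>m\<in>Pow (E - Ob L). W p (E - Ob L) m * Z (c L) (L \<inter> Ob L \<union> m)))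
      = (\<Sum>L\<in>Pow E. \<Sum>M\<in>Pow E. T L M)" using lhs by (intro sum.cong) auto
  also have "\<dots> = (\<Sum>M\<in>Pow E. \<Sum>L\<in>Pow E. T L M)" by (rule sum.swap)
  also have "\<dots> = (\<Sum>M\<in>Pow E. W p E M * Z (c M) M)" using rhs by (intro sum.cong) auto
  finally show ?thesis .
qed

lemma marginal:
  assumes fin: "finite E" and B: "B \<subseteq> E"
  shows "(\<Sum>M\<in>Pow E. W p E M * f (M \<inter> B)) = (\<Sum>m\<in>Pow B. W p B m * f m)"
proof -
  have "(\<Sum>L\<in>Pow E. W p E L * (\<Sum>m\<in>Pow (E - (E - B)). W p (E - (E - B)) m * (\<lambda>_ M. f (M \<inter> B)) () (L \<inter> (E - B) \<union> m)))
       = (\<Sum>L\<in>Pow E. W p E L * (\<lambda>_ M. f (M \<inter> B)) () L)"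
    by (rule tower[OF fin, where Ob = "\<lambda>_. E - B" and c = "\<lambda>_. ()"]) auto
  moreover have "E - (E - B) = B" using B by auto
  moreover have "(L \<inter> (E - B) \<union> m) \<inter> B = m" if "m \<subseteq> B" for L m using that by auto
  ultimately have "(\<Sum>L\<in>Pow E. W p E L * (\<Sum>m\<in>Pow B. W p B m * f m)) = (\<Sum>L\<in>Pow E. W p E L * f (L \<inter> B))"
    by (smt (verit, best) PowD sum.cong)
  then show ?thesis using W_sum1[OF fin] by (simp add: sum_distrib_right[symmetric])
qed



definition rch :: "('v \<times> 'v) set \<Rightarrow> 'v set \<Rightarrow> 'v set" where
  "rch Lt S = {v. \<exists>s\<in>S. (s, v) \<in> Lt\<^sup>*}"

lemma reach_inf_rch: "reach_inf S psi = rch (fst psi) S"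
  by (simp add: reach_inf_def rch_def)

definition closed :: "('v \<times> 'v) set \<Rightarrow> 'v set \<Rightarrow> bool" where
  "closed Lt X \<longleftrightarrow> (\<forall>a b. (a, b) \<in> Lt \<longrightarrow> a \<in> X \<longrightarrow> b \<in> X)"

lemma rch_incl: "S \<subseteq> rch Lt S"
  by (auto simp: rch_def)

lemma rch_mono: "S \<subseteq> T \<Longrightarrow> Lt \<subseteq> Lt' \<Longrightarrow> rch Lt S \<subseteq> rch Lt' T"
  unfolding rch_def using rtrancl_mono by blast

lemma rch_Un: "rch Lt (A \<union> B) = rch Lt A \<union> rch Lt B"
  by (auto simp: rch_def)

lemma rch_closed_sub: "closed Lt X \<Longrightarrow> S \<subseteq> X \<Longrightarrow> rch Lt S \<subseteq> X"
proof
  fix v assume c: "closed Lt X" and s: "S \<subseteq> X" and v: "v \<in> rch Lt S"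
  then obtain a where a: "a \<in> S" "(a, v) \<in> Lt\<^sup>*" by (auto simp: rch_def)
  from a(2) show "v \<in> X"
  proof (induction rule: rtrancl_induct)
    case base then show ?case using a s by auto
  next
    case (step y z) then show ?case using c by (auto simp: closed_def)
  qed
qed

lemma rch_is_closed: "closed Lt (rch Lt S)"
  unfolding closed_def rch_def by (blast intro: rtrancl.rtrancl_into_rtrancl)

lemma rch_idem: "rch Lt (rch Lt S) = rch Lt S"
  by (rule subset_antisym[OF rch_closed_sub[OF rch_is_closed order_refl] rch_incl])

lemma rch_between: "S \<subseteq> T \<Longrightarrow> T \<subseteq> rch Lt S \<Longrightarrow> rch Lt T = rch Lt S"
proof (rule subset_antisym)
  assume a: "S \<subseteq> T" "T \<subseteq> rch Lt S"
  show "rch Lt T \<subseteq> rch Lt S" using rch_mono[OF a(2) order_refl, of Lt] rch_idem[of Lt S] by simp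
  show "rch Lt S \<subseteq> rch Lt T" using rch_mono[OF a(1) order_refl] .
qed

lemma rch_local:
  assumes "\<And>e. fst e \<in> rch Lt A \<Longrightarrow> (e \<in> Lt \<longleftrightarrow> e \<in> Lt')"
  shows "rch Lt' A = rch Lt A"
proof
  show "rch Lt A \<subseteq> rch Lt' A"
  proof
    fix v assume "v \<in> rch Lt A"
    then obtain a where a: "a \<in> A" "(a, v) \<in> Lt\<^sup>*" by (auto simp: rch_def)
    from a(2) have "(a, v) \<in> Lt'\<^sup>*"
    proof (induction rule: rtrancl_induct)
      case base then show ?case by simp
    next
      case (step y z)
      have "y \<in> rch Lt A" using a step by (auto simp: rch_def)
      then have "(y, z) \<in> Lt'" using assms[of "(y,z)"] step by auto
      then show ?case using step by (blast intro: rtrancl.rtrancl_into_rtrancl)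
    qed
    then show "v \<in> rch Lt' A" using a by (auto simp: rch_def)
  qed
next
  show "rch Lt' A \<subseteq> rch Lt A"
  proof (rule rch_closed_sub)
    show "A \<subseteq> rch Lt A" by (rule rch_incl)
    show "closed Lt' (rch Lt A)"
    proof (unfold closed_def, intro allI impI)
      fix a b assume ab: "(a, b) \<in> Lt'" "a \<in> rch Lt A"
      then have "(a, b) \<in> Lt" using assms[of "(a,b)"] by simp
      then show "b \<in> rch Lt A" using ab(2) rch_is_closed[of Lt A] unfolding closed_def by blast
    qed
  qed
qed

lemma rch_avoid:
  assumes c: "closed Lt X"
  shows "rch Lt {t} - X = rch {e \<in> Lt. fst e \<notin> X} {t} - X"
proof
  show "rch {e \<in> Lt. fst e \<notin> X} {t} - X \<subseteq> rch Lt {t} - X"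
    using rch_mono[of "{t}" "{t}" "{e \<in> Lt. fst e \<notin> X}" Lt] by auto
  show "rch Lt {t} - X \<subseteq> rch {e \<in> Lt. fst e \<notin> X} {t} - X"
  proof
    fix v assume v: "v \<in> rch Lt {t} - X"
    have "(t, v) \<in> Lt\<^sup>*" using v by (auto simp: rch_def)
    moreover have "v \<notin> X" using v by auto
    ultimately have "(t, v) \<in> {e \<in> Lt. fst e \<notin> X}\<^sup>*"
    proof (induction rule: rtrancl_induct)
      case base then show ?case by simp
    next
      case (step y z)
      have "y \<notin> X" using step c by (auto simp: closed_def)
      then have "(y, z) \<in> {e \<in> Lt. fst e \<notin> X}" using step by simp
      then show ?case using step \<open>y \<notin> X\<close> by (blast intro: rtrancl.rtrancl_into_rtrancl)
    qed
    then show "v \<in> rch {e \<in> Lt. fst e \<notin> X} {t} - X" using v by (auto simp: rch_def)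
  qed
qed

lemma card_rch_gain:
  fixes R :: "'v::finite set"
  assumes "rch Lt R = R"
  shows "card (rch Lt (R \<union> {v})) = card R + card (rch Lt {v} - R)"
proof -
  have "rch Lt (R \<union> {v}) = R \<union> rch Lt {v}" using rch_Un[of Lt R "{v}"] assms by simp
  then have "rch Lt (R \<union> {v}) = R \<union> (rch Lt {v} - R)" by auto
  then show ?thesis by (metis card_Un_disjoint finite Diff_disjoint Int_commute)
qed



definition obs :: "'v status \<Rightarrow> 'v edge set" where
  "obs U = fst (snd U) \<union> snd (snd U)"

definition sinv :: "'v edge set \<Rightarrow> 'v edge set \<Rightarrow> 'v status \<Rightarrow> bool" where
  "sinv E Lt U \<longleftrightarrow> fst (snd U) \<subseteq> Lt \<and> fst (snd U) \<subseteq> E \<and> snd (snd U) \<subseteq> E \<and> snd (snd U) \<inter> Lt = {}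
     \<and> (\<forall>e\<in>fst (snd U). snd e \<in> fst U) \<and> (\<forall>e\<in>obs U. fst e \<in> fst U)"

definition dA :: "'v edge set \<Rightarrow> 'v status \<Rightarrow> 'v edge set" where
  "dA E U = {e \<in> E. fst e \<in> fst U \<and> snd e \<notin> fst U \<and> e \<notin> fst (snd U) \<and> e \<notin> snd (snd U)}"

lemma dr_eq: "diff_round E Lt U = (fst U \<union> snd ` (dA E U \<inter> Lt), (fst (snd U) \<union> (dA E U \<inter> Lt), snd (snd U) \<union> (dA E U - Lt)))"
  by (simp add: diff_round_def dA_def Let_def)

lemma dr_sinv: "sinv E Lt U \<Longrightarrow> sinv E Lt (diff_round E Lt U)"
  unfolding dr_eq sinv_def obs_def dA_def by auto

lemma dr_fst: "fst U \<subseteq> fst (diff_round E Lt U)" "fst (diff_round E Lt U) \<subseteq> rch Lt (fst U)"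
proof -
  show "fst U \<subseteq> fst (diff_round E Lt U)" unfolding dr_eq by auto
  show "fst (diff_round E Lt U) \<subseteq> rch Lt (fst U)"
  proof
    fix v assume "v \<in> fst (diff_round E Lt U)"
    then have "v \<in> fst U \<or> (\<exists>a. (a, v) \<in> Lt \<and> a \<in> fst U)" unfolding dr_eq dA_def by auto
    then show "v \<in> rch Lt (fst U)" unfolding rch_def by auto
  qed
qed

lemma dr_obs: "obs U \<subseteq> obs (diff_round E Lt U)" "dA E U \<subseteq> obs (diff_round E Lt U)"
  "fst (snd U) \<subseteq> fst (snd (diff_round E Lt U))" "snd (snd U) \<subseteq> snd (snd (diff_round E Lt U))"
  unfolding dr_eq obs_def by auto

lemma dr_local:
  assumes "Lt' \<inter> obs (diff_round E Lt U) = Lt \<inter> obs (diff_round E Lt U)"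
  shows "diff_round E Lt' U = diff_round E Lt U"
proof -
  have "dA E U \<inter> Lt' = dA E U \<inter> Lt" using assms dr_obs(2)[of E U Lt] by blast
  moreover have "dA E U - Lt' = dA E U - Lt" using assms dr_obs(2)[of E U Lt] by blast
  ultimately show ?thesis unfolding dr_eq by simp
qed

lemma drn_sinv: "sinv E Lt U \<Longrightarrow> sinv E Lt ((diff_round E Lt ^^ n) U)"
  by (induction n) (auto simp: dr_sinv)

lemma drn_fst: "fst U \<subseteq> fst ((diff_round E Lt ^^ n) U)" "fst ((diff_round E Lt ^^ n) U) \<subseteq> rch Lt (fst U)"
proof -
  show "fst U \<subseteq> fst ((diff_round E Lt ^^ n) U)"
  proof (induction n)
    case (Suc n)
    then show ?case using dr_fst(1)[of "(diff_round E Lt ^^ n) U" E Lt] by auto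
  qed simp
  show "fst ((diff_round E Lt ^^ n) U) \<subseteq> rch Lt (fst U)"
  proof (induction n)
    case 0 then show ?case by (simp add: rch_incl)
  next
    case (Suc n)
    have "fst ((diff_round E Lt ^^ Suc n) U) \<subseteq> rch Lt (fst ((diff_round E Lt ^^ n) U))"
      using dr_fst(2) by simp
    also have "\<dots> \<subseteq> rch Lt (rch Lt (fst U))" using rch_mono[OF Suc order_refl] .
    finally show ?case by (simp add: rch_idem)
  qed
qed

lemma drn_obs: "obs U \<subseteq> obs ((diff_round E Lt ^^ n) U)"
proof (induction n)
  case (Suc n)
  then show ?case using dr_obs(1)[of "(diff_round E Lt ^^ n) U" E Lt] by auto
qed simp

lemma drn_obs_mono: "m \<le> n \<Longrightarrow> obs ((diff_round E Lt ^^ m) U) \<subseteq> obs ((diff_round E Lt ^^ n) U)"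
proof (induction n)
  case 0 then show ?case by simp
next
  case (Suc n)
  show ?case
  proof (cases "m = Suc n")
    case False
    then have "obs ((diff_round E Lt ^^ m) U) \<subseteq> obs ((diff_round E Lt ^^ n) U)" using Suc by auto
    also have "\<dots> \<subseteq> obs ((diff_round E Lt ^^ Suc n) U)" using dr_obs(1) by simp
    finally show ?thesis .
  qed simp
qed

lemma drn_local:
  assumes "Lt' \<inter> obs ((diff_round E Lt ^^ n) U) = Lt \<inter> obs ((diff_round E Lt ^^ n) U)"
  shows "(diff_round E Lt' ^^ n) U = (diff_round E Lt ^^ n) U"
  using assms
proof (induction n)
  case 0 then show ?case by simp
next
  case (Suc n)
  let ?V = "(diff_round E Lt ^^ n) U"
  have sub: "obs ?V \<subseteq> obs ((diff_round E Lt ^^ Suc n) U)" using dr_obs(1) by simp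
  have IH: "(diff_round E Lt' ^^ n) U = ?V" using Suc sub by blast
  have "diff_round E Lt' ?V = diff_round E Lt ?V" using Suc.prems by (intro dr_local) simp
  then show ?case using IH by simp
qed

lemma dr_stable:
  assumes "fst (diff_round E Lt U) = fst U"
  shows "diff_round E Lt (diff_round E Lt U) = diff_round E Lt U"
proof -
  have "dA E U \<inter> Lt = {}" using assms unfolding dr_eq dA_def by auto
  then have "dA E (diff_round E Lt U) = {}" unfolding dA_def by (simp add: dr_eq) (auto simp: dA_def)
  then show ?thesis by (simp add: dr_eq[of E Lt "diff_round E Lt U"])
qed

lemma dr_fix_dA:
  assumes h: "diff_round E Lt U = U" shows "dA E U = {}"
proof -
  have "dA E U \<inter> Lt \<subseteq> fst (snd U)" using arg_cong[OF h, of "\<lambda>U. fst (snd U)"] unfolding dr_eq[of E Lt U] by auto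
  moreover have "dA E U - Lt \<subseteq> snd (snd U)" using arg_cong[OF h, of "\<lambda>U. snd (snd U)"] unfolding dr_eq[of E Lt U] by auto
  moreover have "dA E U \<inter> fst (snd U) = {}" "dA E U \<inter> snd (snd U) = {}" unfolding dA_def by auto
  ultimately show ?thesis by blast
qed

lemma dr_empty: "fst U = {} \<Longrightarrow> diff_round E Lt U = U"
  by (simp add: dr_eq dA_def prod_eq_iff)

lemma drn_terminate:
  fixes U :: "'v::finite status"
  shows "diff_round E Lt ((diff_round E Lt ^^ card (UNIV :: 'v set)) U) = (diff_round E Lt ^^ card (UNIV :: 'v set)) U"
proof -
  let ?f = "diff_round E Lt"
  have key: "?f ((?f ^^ n) U) \<noteq> (?f ^^ n) U \<Longrightarrow> n + 1 \<le> card (fst ((?f ^^ n) U))" for n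
  proof (induction n)
    case 0
    then have "fst U \<noteq> {}" using dr_empty[of U E Lt] by auto
    then show ?case by (simp add: card_gt_0_iff Suc_le_eq)
  next
    case (Suc n)
    have nf: "?f ((?f ^^ n) U) \<noteq> (?f ^^ n) U"
    proof
      assume "?f ((?f ^^ n) U) = (?f ^^ n) U"
      then show False using Suc.prems by simp
    qed
    have ne: "fst ((?f ^^ Suc n) U) \<noteq> fst ((?f ^^ n) U)"
    proof
      assume "fst ((?f ^^ Suc n) U) = fst ((?f ^^ n) U)"
      then have "?f (?f ((?f ^^ n) U)) = ?f ((?f ^^ n) U)" using dr_stable by simp
      then show False using Suc.prems by simp
    qed
    have "fst ((?f ^^ n) U) \<subseteq> fst ((?f ^^ Suc n) U)" using dr_fst(1) by simp
    with ne have "fst ((?f ^^ n) U) \<subset> fst ((?f ^^ Suc n) U)" by auto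
    then have "card (fst ((?f ^^ n) U)) < card (fst ((?f ^^ Suc n) U))" by (simp add: psubset_card_mono)
    with Suc.IH[OF nf] show ?case by simp
  qed
  show ?thesis
  proof (rule ccontr)
    assume "\<not> ?thesis"
    from key[OF this] have "card (UNIV :: 'v set) + 1 \<le> card (fst ((?f ^^ card (UNIV :: 'v set)) U))" .
    moreover have "card (fst ((?f ^^ card (UNIV :: 'v set)) U)) \<le> card (UNIV :: 'v set)" by (simp add: card_mono)
    ultimately show False by simp
  qed
qed

lemma run_end:
  fixes U :: "'v::finite status"
  assumes inv: "sinv E Lt U" and LtE: "Lt \<subseteq> E"
  shows "fst (run_to_end E Lt U) = rch Lt (fst U)"
    and "\<And>e. e \<in> E \<Longrightarrow> fst e \<in> fst (run_to_end E Lt U) \<Longrightarrow> snd e \<notin> fst (run_to_end E Lt U) \<Longrightarrow> e \<in> snd (snd (run_to_end E Lt U))"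
    and "sinv E Lt (run_to_end E Lt U)"
proof -
  let ?U = "run_to_end E Lt U"
  have dA0: "dA E ?U = {}" unfolding run_to_end_def by (rule dr_fix_dA[OF drn_terminate])
  have i2: "sinv E Lt ?U" unfolding run_to_end_def by (rule drn_sinv[OF inv])
  show "sinv E Lt ?U" by fact
  show outD: "e \<in> snd (snd ?U)" if "e \<in> E" "fst e \<in> fst ?U" "snd e \<notin> fst ?U" for e
  proof -
    have "e \<in> fst (snd ?U) \<or> e \<in> snd (snd ?U)" using dA0 that unfolding dA_def by blast
    moreover have "e \<notin> fst (snd ?U)" using i2 that(3) unfolding sinv_def by auto
    ultimately show ?thesis by auto
  qed
  have cl: "closed Lt (fst ?U)"
    unfolding closed_def
  proof (intro allI impI)
    fix a b assume ab: "(a, b) \<in> Lt" "a \<in> fst ?U"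
    show "b \<in> fst ?U"
    proof (rule ccontr)
      assume "b \<notin> fst ?U"
      then have "(a, b) \<in> snd (snd ?U)" using outD[of "(a,b)"] ab LtE by auto
      then show False using i2 ab(1) unfolding sinv_def by auto
    qed
  qed
  have "rch Lt (fst U) \<subseteq> fst ?U"
    by (rule rch_closed_sub[OF cl]) (simp add: run_to_end_def drn_fst(1))
  moreover have "fst ?U \<subseteq> rch Lt (fst U)" unfolding run_to_end_def by (rule drn_fst(2))
  ultimately show "fst ?U = rch Lt (fst U)" by auto
qed

lemma run_local:
  assumes "Lt' \<inter> obs (run_to_end E Lt U) = Lt \<inter> obs (run_to_end E Lt U)"
  shows "run_to_end E Lt' U = run_to_end E Lt U"
  using assms unfolding run_to_end_def by (rule drn_local)



lemma seed_sinv: "sinv E Lt U \<Longrightarrow> sinv E Lt (seed_step E Lt pol d U)"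
  unfolding seed_step_def by (rule drn_sinv) (auto simp: sinv_def obs_def)

lemma seed_fst: "fst U \<union> {pol (fst U) (snd U)} \<subseteq> fst (seed_step E Lt pol d U)"
   "fst (seed_step E Lt pol d U) \<subseteq> rch Lt (fst U \<union> {pol (fst U) (snd U)})"
  unfolding seed_step_def using drn_fst[where U="(fst U \<union> {pol (fst U) (snd U)}, snd U)" and E=E and Lt=Lt and n=d] by auto

lemma seed_obs: "obs U \<subseteq> obs (seed_step E Lt pol d U)"
  unfolding seed_step_def using drn_obs[where U="(fst U \<union> {pol (fst U) (snd U)}, snd U)" and E=E and Lt=Lt and n=d]
  by (simp add: obs_def)

lemma seed_local:
  assumes "Lt' \<inter> obs (seed_step E Lt pol d U) = Lt \<inter> obs (seed_step E Lt pol d U)"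
  shows "seed_step E Lt' pol d U = seed_step E Lt pol d U"
  using assms unfolding seed_step_def by (rule drn_local)

lemma proc_0: "proc_status E Lt pol d 0 = ({}, ({}, {}))"
  by (simp add: proc_status_def)

lemma proc_Suc: "proc_status E Lt pol d (Suc i) = seed_step E Lt pol d (proc_status E Lt pol d i)"
  by (simp add: proc_status_def)

lemma proc_sinv: "sinv E Lt (proc_status E Lt pol d i)"
proof (induction i)
  case 0 then show ?case by (simp add: proc_0 sinv_def obs_def)
next
  case (Suc i) then show ?case unfolding proc_Suc by (rule seed_sinv)
qed

lemma proc_obs_mono: "i \<le> j \<Longrightarrow> obs (proc_status E Lt pol d i) \<subseteq> obs (proc_status E Lt pol d j)"
proof (induction j)
  case 0 then show ?case by simp
next
  case (Suc j)
  show ?case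
  proof (cases "i = Suc j")
    case False
    then have "obs (proc_status E Lt pol d i) \<subseteq> obs (proc_status E Lt pol d j)" using Suc by auto
    also have "\<dots> \<subseteq> obs (proc_status E Lt pol d (Suc j))" unfolding proc_Suc by (rule seed_obs)
    finally show ?thesis .
  qed simp
qed

lemma proc_local:
  assumes "Lt' \<inter> obs (proc_status E Lt pol d i) = Lt \<inter> obs (proc_status E Lt pol d i)"
  shows "proc_status E Lt' pol d i = proc_status E Lt pol d i"
  using assms
proof (induction i)
  case 0 then show ?case by (simp add: proc_0)
next
  case (Suc i)
  have sub: "obs (proc_status E Lt pol d i) \<subseteq> obs (proc_status E Lt pol d (Suc i))"
    by (rule proc_obs_mono) simp
  have IH: "proc_status E Lt' pol d i = proc_status E Lt pol d i" using Suc sub by blast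
  have "seed_step E Lt' pol d (proc_status E Lt pol d i) = seed_step E Lt pol d (proc_status E Lt pol d i)"
    using Suc.prems unfolding proc_Suc by (rule seed_local)
  then show ?case using IH by (simp add: proc_Suc)
qed

lemma proc_fst_mono: "i \<le> j \<Longrightarrow> fst (proc_status E Lt pol d i) \<subseteq> fst (proc_status E Lt pol d j)"
proof (induction j)
  case 0 then show ?case by simp
next
  case (Suc j)
  show ?case
  proof (cases "i = Suc j")
    case False
    then have "fst (proc_status E Lt pol d i) \<subseteq> fst (proc_status E Lt pol d j)" using Suc by auto
    also have "\<dots> \<subseteq> fst (proc_status E Lt pol d (Suc j))" unfolding proc_Suc
      using seed_fst(1)[where U="proc_status E Lt pol d j" and E=E and Lt=Lt and pol=pol and d=d] by simp
    finally show ?thesis .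
  qed simp
qed

lemma sinv_snd: "sinv E Lt U \<Longrightarrow> snd U = (Lt \<inter> obs U, obs U - Lt)"
  unfolding sinv_def obs_def by (cases U) auto

lemma sinv_obsE: "sinv E Lt U \<Longrightarrow> obs U \<subseteq> {e \<in> E. fst e \<in> fst U}"
  unfolding sinv_def obs_def by auto



lemma full_iff: "psi \<in> full_realizations E \<longleftrightarrow> fst psi \<subseteq> E \<and> snd psi = E - fst psi"
  unfolding full_realizations_def is_realization_def by auto

lemma cond_sum:
  assumes fin: "finite E" and ObE: "Ob \<subseteq> E" and K: "K \<subseteq> Ob"
  shows "(\<Sum>psi\<in>{psi \<in> full_realizations E. prec (K, Ob - K) psi}. cond_prob p psi (K, Ob - K) * f psi)
       = (\<Sum>m\<in>Pow (E - Ob). W p (E - Ob) m * f (K \<union> m, E - (K \<union> m)))"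
proof -
  let ?g = "\<lambda>m. (K \<union> m, E - (K \<union> m))"
  let ?T = "{psi \<in> full_realizations E. prec (K, Ob - K) psi}"
  have bij: "bij_betw ?g (Pow (E - Ob)) ?T"
  proof (rule bij_betw_byWitness[where f' = "\<lambda>psi. fst psi - Ob"])
    show "\<forall>a\<in>Pow (E - Ob). fst (?g a) - Ob = a" using K by auto
    show "\<forall>a'\<in>?T. ?g (fst a' - Ob) = a'"
    proof
      fix psi assume "psi \<in> ?T"
      then have h: "fst psi \<subseteq> E" "snd psi = E - fst psi" "K \<subseteq> fst psi" "Ob - K \<subseteq> snd psi"
        unfolding full_iff prec_def by auto
      then have "K \<union> (fst psi - Ob) = fst psi" using K by auto
      then show "?g (fst psi - Ob) = psi" using h(2) by (cases psi) auto
    qed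
    show "?g ` Pow (E - Ob) \<subseteq> ?T" using K ObE by (auto simp: full_iff prec_def; blast)
    show "(\<lambda>psi. fst psi - Ob) ` ?T \<subseteq> Pow (E - Ob)" by (auto simp: full_iff)
  qed
  have "(\<Sum>m\<in>Pow (E - Ob). W p (E - Ob) m * f (?g m)) = (\<Sum>m\<in>Pow (E - Ob). cond_prob p (?g m) (K, Ob - K) * f (?g m))"
  proof (intro sum.cong refl)
    fix m assume m: "m \<in> Pow (E - Ob)"
    have 1: "fst (?g m) - fst (K, Ob - K) = m" using m K by auto
    have 2: "snd (?g m) - snd (K, Ob - K) = (E - Ob) - m" using m K ObE by auto
    show "W p (E - Ob) m * f (?g m) = cond_prob p (?g m) (K, Ob - K) * f (?g m)"
      unfolding cond_prob_def 1 2 W_def ..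
  qed
  also have "\<dots> = (\<Sum>psi\<in>?T. cond_prob p psi (K, Ob - K) * f psi)"
    by (rule sum.reindex_bij_betw[OF bij, where g = "\<lambda>psi. cond_prob p psi (K, Ob - K) * f psi"])
  finally show ?thesis by simp
qed

lemma rp_sum:
  assumes fin: "finite E"
  shows "(\<Sum>psi\<in>full_realizations E. real_prob p psi * f psi) = (\<Sum>M\<in>Pow E. W p E M * f (M, E - M))"
proof -
  have "{psi \<in> full_realizations E. prec ({}, {} - {}) psi} = full_realizations E" by (auto simp: prec_def)
  moreover have "real_prob p psi = cond_prob p psi ({}, {} - {})" for psi by (simp add: real_prob_def)
  ultimately show ?thesis using cond_sum[OF fin, of "{}" "{}" p f] by simp
qed

lemma Dfi_eq:
  assumes fin: "finite E" and inv: "sinv E Lt U"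
  shows "Delta_f_inf E p S Vs (snd U) = (\<Sum>m\<in>Pow (E - obs U). W p (E - obs U) m * Delta_inf S Vs (Lt \<inter> obs U \<union> m, E - (Lt \<inter> obs U \<union> m)))"
proof -
  have e: "snd U = (Lt \<inter> obs U, obs U - (Lt \<inter> obs U))" using sinv_snd[OF inv] by auto
  have "obs U \<subseteq> E" using inv unfolding sinv_def obs_def by auto
  then show ?thesis unfolding Delta_f_inf_def e by (rule cond_sum[OF fin]) auto
qed

lemma F_val_eq:
  fixes E :: "('v::finite \<times> 'v) set"
  shows "F_val E p pol k d = (\<Sum>M\<in>Pow E. W p E M * real (card (rch M (fst (proc_status E M pol d k)))))"
proof -
  have "F_val E p pol k d = (\<Sum>M\<in>Pow E. W p E M * real (card (fst (run_to_end E M (proc_status E M pol d k)))))"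
    unfolding F_val_def by (subst rp_sum) auto
  also have "\<dots> = (\<Sum>M\<in>Pow E. W p E M * real (card (rch M (fst (proc_status E M pol d k)))))"
    by (intro sum.cong refl) (simp add: run_end(1)[OF proc_sinv])
  finally show ?thesis .
qed

lemma cond_nonneg:
  assumes "\<forall>e\<in>E. 0 \<le> p e \<and> p e \<le> 1" "psi \<in> full_realizations E"
  shows "0 \<le> cond_prob p psi phi"
  using assms unfolding cond_prob_def full_iff
  by (intro mult_nonneg_nonneg prod_nonneg) auto

lemma cond_mult:
  fixes psi :: "'v::finite realization"
  assumes "prec phi phi'" "prec phi' psi"
  shows "cond_prob p psi phi = cond_prob p psi phi' * cond_prob p phi' phi"
proof -
  have 1: "fst psi - fst phi = (fst psi - fst phi') \<union> (fst phi' - fst phi)" using assms unfolding prec_def by auto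
  have 2: "snd psi - snd phi = (snd psi - snd phi') \<union> (snd phi' - snd phi)" using assms unfolding prec_def by auto
  show ?thesis unfolding cond_prob_def 1 2
    by (subst prod.union_disjoint, simp, simp, blast)+ (simp add: algebra_simps)
qed



definition EdX :: "'v edge set \<Rightarrow> 'v set \<Rightarrow> 'v edge set" where
  "EdX E Y = {e \<in> E. fst e \<in> Y}"

definition hh :: "'v edge set \<Rightarrow> ('v edge \<Rightarrow> real) \<Rightarrow> 'v \<Rightarrow> 'v set \<Rightarrow> real" where
  "hh E p v Y = (\<Sum>M\<in>Pow E. W p E M * real (card (rch (M - EdX E Y) {v} - Y)))"

definition Hmax :: "'v::finite edge set \<Rightarrow> ('v edge \<Rightarrow> real) \<Rightarrow> 'v set \<Rightarrow> real" where
  "Hmax E p Y = Max (range (\<lambda>v. hh E p v Y))"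

lemma diff_as_int: "M \<subseteq> E \<Longrightarrow> M - X = M \<inter> (E - X)"
  by auto

lemma hh_alt:
  assumes fin: "finite E"
  shows "hh E p v Y = (\<Sum>m\<in>Pow (E - EdX E Y). W p (E - EdX E Y) m * real (card (rch m {v} - Y)))"
proof -
  have "hh E p v Y = (\<Sum>M\<in>Pow E. W p E M * real (card (rch (M \<inter> (E - EdX E Y)) {v} - Y)))"
    unfolding hh_def
  proof (intro sum.cong refl)
    fix M assume "M \<in> Pow E"
    then have "M - EdX E Y = M \<inter> (E - EdX E Y)" by auto
    then show "W p E M * real (card (rch (M - EdX E Y) {v} - Y)) = W p E M * real (card (rch (M \<inter> (E - EdX E Y)) {v} - Y))" by simp
  qed
  also have "\<dots> = (\<Sum>m\<in>Pow (E - EdX E Y). W p (E - EdX E Y) m * real (card (rch m {v} - Y)))"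
    by (rule marginal[OF fin, where f = "\<lambda>m. real (card (rch m {v} - Y))"]) auto
  finally show ?thesis .
qed

lemma hh_anti:
  fixes E :: "('v::finite \<times> 'v) set"
  assumes p01: "\<forall>e\<in>E. 0 \<le> p e \<and> p e \<le> 1" and YY: "Y \<subseteq> Y'"
  shows "hh E p v Y' \<le> hh E p v Y"
  unfolding hh_def
proof (rule sum_mono)
  fix M assume M: "M \<in> Pow E"
  have "EdX E Y \<subseteq> EdX E Y'" using YY by (auto simp: EdX_def)
  then have "rch (M - EdX E Y') {v} - Y' \<subseteq> rch (M - EdX E Y) {v} - Y"
    using rch_mono[of "{v}" "{v}" "M - EdX E Y'" "M - EdX E Y"] YY by auto
  then have "card (rch (M - EdX E Y') {v} - Y') \<le> card (rch (M - EdX E Y) {v} - Y)" by (simp add: card_mono)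
  moreover have "0 \<le> W p E M" using W_nonneg p01 M by auto
  ultimately show "W p E M * real (card (rch (M - EdX E Y') {v} - Y')) \<le> W p E M * real (card (rch (M - EdX E Y) {v} - Y))"
    by (simp add: mult_left_mono)
qed

lemma hh_nonneg:
  fixes E :: "('v::finite \<times> 'v) set"
  assumes p01: "\<forall>e\<in>E. 0 \<le> p e \<and> p e \<le> 1"
  shows "0 \<le> hh E p v Y"
  unfolding hh_def using W_nonneg p01 by (intro sum_nonneg mult_nonneg_nonneg) auto

lemma hh_UNIV: "hh E p v UNIV = 0"
  unfolding hh_def by simp

lemma Hmax_UNIV: "Hmax E p UNIV = 0"
  unfolding Hmax_def hh_UNIV by simp

lemma Dfi_run:
  fixes E :: "('v::finite \<times> 'v) set"
  assumes inv: "sinv E M V" and ME: "M \<subseteq> E"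
  shows "Delta_f_inf E p (fst (run_to_end E M V)) {v} (snd (run_to_end E M V)) = hh E p v (rch M (fst V))"
proof -
  let ?V = "run_to_end E M V"
  let ?R = "rch M (fst V)"
  have R: "fst ?V = ?R" by (rule run_end(1)[OF inv ME])
  have out: "\<And>e. e \<in> E \<Longrightarrow> fst e \<in> ?R \<Longrightarrow> snd e \<notin> ?R \<Longrightarrow> e \<in> snd (snd ?V)"
    using run_end(2)[OF inv ME] R by auto
  have inv2: "sinv E M ?V" by (rule run_end(3)[OF inv ME])
  have obsR: "obs ?V \<subseteq> EdX E ?R" using sinv_obsE[OF inv2] R by (auto simp: EdX_def)
  have obsE: "obs ?V \<subseteq> E" using obsR by (auto simp: EdX_def)
  have trm: "Delta_inf ?R {v} (M \<inter> obs ?V \<union> m, E - (M \<inter> obs ?V \<union> m)) = real (card (rch (m - EdX E ?R) {v} - ?R))"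
    if m: "m \<in> Pow (E - obs ?V)" for m
  proof -
    let ?N = "M \<inter> obs ?V \<union> m"
    have NE: "?N \<subseteq> E" using m ME by auto
    have cl: "closed ?N ?R"
      unfolding closed_def
    proof (intro allI impI)
      fix a b assume ab: "(a, b) \<in> ?N" "a \<in> ?R"
      show "b \<in> ?R"
      proof (rule ccontr)
        assume "b \<notin> ?R"
        then have D: "(a, b) \<in> snd (snd ?V)" using out[of "(a,b)"] ab NE by auto
        then have "(a, b) \<in> obs ?V" by (simp add: obs_def)
        then have "(a, b) \<in> M" using ab(1) m by auto
        then show False using D inv2 unfolding sinv_def by auto
      qed
    qed
    have RR: "rch ?N ?R = ?R" by (rule subset_antisym[OF rch_closed_sub[OF cl order_refl] rch_incl])
    have "Delta_inf ?R {v} (?N, E - ?N) = real (card (rch ?N {v} - ?R))"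
    proof -
      have "real (card (rch ?N (?R \<union> {v}))) = real (card ?R) + real (card (rch ?N {v} - ?R))"
        using card_rch_gain[OF RR, of v] by (metis of_nat_add)
      then show ?thesis unfolding Delta_inf_def reach_inf_rch fst_conv RR by linarith
    qed
    also have "rch ?N {v} - ?R = rch {e \<in> ?N. fst e \<notin> ?R} {v} - ?R" by (rule rch_avoid[OF cl])
    also have "{e \<in> ?N. fst e \<notin> ?R} = m - EdX E ?R" using obsR m by (auto simp: EdX_def)
    finally show ?thesis .
  qed
  have "Delta_f_inf E p (fst ?V) {v} (snd ?V) = (\<Sum>m\<in>Pow (E - obs ?V). W p (E - obs ?V) m * real (card (rch (m - EdX E ?R) {v} - ?R)))"
    unfolding Dfi_eq[OF finite inv2] R
  proof (intro sum.cong refl)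
    fix m assume m: "m \<in> Pow (E - obs ?V)"
    show "W p (E - obs ?V) m * Delta_inf ?R {v} (M \<inter> obs ?V \<union> m, E - (M \<inter> obs ?V \<union> m)) = W p (E - obs ?V) m * real (card (rch (m - EdX E ?R) {v} - ?R))"
      by (simp only: trm[OF m])
  qed
  also have "\<dots> = (\<Sum>m\<in>Pow (E - obs ?V). W p (E - obs ?V) m * real (card (rch (m \<inter> (E - EdX E ?R)) {v} - ?R)))"
  proof (intro sum.cong refl)
    fix m assume "m \<in> Pow (E - obs ?V)"
    then have "m - EdX E ?R = m \<inter> (E - EdX E ?R)" by auto
    then show "W p (E - obs ?V) m * real (card (rch (m - EdX E ?R) {v} - ?R)) = W p (E - obs ?V) m * real (card (rch (m \<inter> (E - EdX E ?R)) {v} - ?R))" by simp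
  qed
  also have "\<dots> = (\<Sum>m\<in>Pow (E - EdX E ?R). W p (E - EdX E ?R) m * real (card (rch m {v} - ?R)))"
    by (rule marginal[OF finite]) (use obsR in auto)
  also have "\<dots> = hh E p v ?R" by (rule hh_alt[symmetric, OF finite])
  finally show ?thesis .
qed

lemma mg_run:
  fixes E :: "('v::finite \<times> 'v) set"
  assumes inv: "sinv E M V" and ME: "M \<subseteq> E"
  shows "max_gain E p (run_to_end E M V) = Hmax E p (rch M (fst V))"
  unfolding max_gain_def Hmax_def using Dfi_run[OF inv ME] by simp



lemma sinv_change: "sinv E Lt U \<Longrightarrow> fst (snd U) \<subseteq> Lt' \<Longrightarrow> snd (snd U) \<inter> Lt' = {} \<Longrightarrow> sinv E Lt' U"
  unfolding sinv_def by auto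

lemma drn_comp: "fst (snd U) \<subseteq> fst (snd ((diff_round E Lt ^^ n) U)) \<and> snd (snd U) \<subseteq> snd (snd ((diff_round E Lt ^^ n) U))"
proof (induction n)
  case (Suc n)
  then show ?case using dr_obs(3,4)[of "(diff_round E Lt ^^ n) U" E Lt] by auto
qed simp

lemma run_prec: "prec (snd U) (snd (run_to_end E Lt U))"
  unfolding prec_def run_to_end_def using drn_comp by blast

lemma group_final:
  fixes E :: "('v::finite \<times> 'v) set" and U :: "'v status"
  assumes inv: "sinv E Lt U"
  shows "(\<Sum>U'\<in>final_statuses E U. cond_prob p (snd U') (snd U) * G U')
       = (\<Sum>psi\<in>{psi \<in> full_realizations E. prec (snd U) psi}. cond_prob p psi (snd U) * G (run_to_end E (fst psi) U))"
proof -
  define A where "A = {psi \<in> full_realizations E. prec (snd U) psi}"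
  define rho where "rho psi = run_to_end E (fst psi) U" for psi :: "'v realization"
  have fs: "final_statuses E U = rho ` A" unfolding final_statuses_def A_def rho_def by (auto simp: image_iff) (metis fst_conv)
  have Ainv: "sinv E (fst psi) U" "fst psi \<subseteq> E" "snd psi = E - fst psi" if "psi \<in> A" for psi
  proof -
    have h: "fst psi \<subseteq> E" "snd psi = E - fst psi" "fst (snd U) \<subseteq> fst psi" "snd (snd U) \<subseteq> snd psi"
      using that unfolding A_def full_iff prec_def by auto
    then show "sinv E (fst psi) U" by (intro sinv_change[OF inv]) auto
    show "fst psi \<subseteq> E" "snd psi = E - fst psi" using h by auto
  qed
  have inner: "(\<Sum>psi\<in>{x \<in> A. rho x = y}. cond_prob p psi (snd U) * G (rho psi)) = cond_prob p (snd y) (snd U) * G y"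
    if y: "y \<in> rho ` A" for y
  proof -
    obtain psi0 where psi0: "psi0 \<in> A" "y = rho psi0" using y by auto
    have inv0: "sinv E (fst psi0) U" using Ainv[OF psi0(1)] by simp
    have invy: "sinv E (fst psi0) y" unfolding psi0(2) rho_def by (rule run_end(3)[OF inv0 Ainv(2)[OF psi0(1)]])
    have py: "prec (snd U) (snd y)" unfolding psi0(2) rho_def by (rule run_prec)
    have seteq: "{x \<in> A. rho x = y} = {psi \<in> full_realizations E. prec (snd y) psi}"
    proof (intro set_eqI iffI)
      fix psi assume "psi \<in> {x \<in> A. rho x = y}"
      then have psi: "psi \<in> A" "rho psi = y" by auto
      have "sinv E (fst psi) y" using run_end(3)[OF Ainv(1,2)[OF psi(1)]] psi(2) unfolding rho_def by simp
      then have "prec (snd y) psi" using Ainv(2,3)[OF psi(1)] unfolding sinv_def prec_def by auto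
      then show "psi \<in> {psi \<in> full_realizations E. prec (snd y) psi}" using psi(1) unfolding A_def by auto
    next
      fix psi assume "psi \<in> {psi \<in> full_realizations E. prec (snd y) psi}"
      then have psi: "psi \<in> full_realizations E" "prec (snd y) psi" by auto
      have "prec (snd U) psi" using py psi(2) unfolding prec_def by auto
      then have pA: "psi \<in> A" using psi(1) unfolding A_def by auto
      have "fst psi \<inter> obs y = fst (snd y)"
        using psi Ainv(3)[OF pA] invy unfolding prec_def obs_def sinv_def by auto
      moreover have "fst psi0 \<inter> obs y = fst (snd y)"
        using invy unfolding obs_def sinv_def by auto
      ultimately have "rho psi = rho psi0" unfolding rho_def psi0(2) by (intro run_local) simp
      then show "psi \<in> {x \<in> A. rho x = y}" using pA psi0(2) by auto
    qed
    have sum1: "(\<Sum>psi\<in>{psi \<in> full_realizations E. prec (snd y) psi}. cond_prob p psi (snd y)) = 1"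
    proof -
      have sy: "snd y = (fst psi0 \<inter> obs y, obs y - (fst psi0 \<inter> obs y))" using sinv_snd[OF invy] by auto
      have oE: "obs y \<subseteq> E" using invy unfolding sinv_def obs_def by auto
      have "(\<Sum>psi\<in>{psi \<in> full_realizations E. prec (snd y) psi}. cond_prob p psi (snd y) * 1)
          = (\<Sum>m\<in>Pow (E - obs y). W p (E - obs y) m * 1)"
        unfolding sy by (rule cond_sum[OF finite oE]) auto
      then show ?thesis using W_sum1[of "E - obs y" p] by simp
    qed
    have "(\<Sum>psi\<in>{x \<in> A. rho x = y}. cond_prob p psi (snd U) * G (rho psi))
        = (\<Sum>psi\<in>{psi \<in> full_realizations E. prec (snd y) psi}. (cond_prob p psi (snd y) * cond_prob p (snd y) (snd U)) * G y)"
    proof (rule sum.cong)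
      show "{x \<in> A. rho x = y} = {psi \<in> full_realizations E. prec (snd y) psi}" by (rule seteq)
    next
      fix psi assume "psi \<in> {psi \<in> full_realizations E. prec (snd y) psi}"
      then have psi: "psi \<in> {x \<in> A. rho x = y}" "prec (snd y) psi" using seteq by auto
      then show "cond_prob p psi (snd U) * G (rho psi) = (cond_prob p psi (snd y) * cond_prob p (snd y) (snd U)) * G y"
        using cond_mult[OF py psi(2), of p] by auto
    qed
    also have "\<dots> = (\<Sum>psi\<in>{psi \<in> full_realizations E. prec (snd y) psi}. cond_prob p psi (snd y)) * (cond_prob p (snd y) (snd U) * G y)"
      by (simp add: sum_distrib_left sum_distrib_right algebra_simps)
    finally show ?thesis using sum1 by simp
  qed
  have finA: "finite A" by simp
  have "(\<Sum>psi\<in>A. cond_prob p psi (snd U) * G (rho psi))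
      = (\<Sum>y\<in>rho ` A. \<Sum>psi\<in>{x \<in> A. rho x = y}. cond_prob p psi (snd U) * G (rho psi))"
    by (rule sum.image_gen[OF finA])
  also have "\<dots> = (\<Sum>y\<in>rho ` A. cond_prob p (snd y) (snd U) * G y)"
    using inner by (intro sum.cong refl) auto
  finally show ?thesis unfolding fs A_def rho_def by simp
qed



lemma gain_step:
  fixes E :: "('v::finite \<times> 'v) set"
  assumes greedy: "is_greedy E p pi_g"
  shows "F_val E p pi_g (Suc i) d - F_val E p pi_g i d
       = (\<Sum>M\<in>Pow E. W p E M * max_gain E p (proc_status E M pi_g d i))"
proof -
  define U where "U M = proc_status E M pi_g d i" for M
  define Z where "Z V M' = Delta_inf (fst V) {pi_g (fst V) (snd V)} (M', E - M')" for V :: "'v status" and M'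
  have step: "real (card (rch M (fst (proc_status E M pi_g d (Suc i))))) - real (card (rch M (fst (proc_status E M pi_g d i))))
      = Z (U M) M" for M
  proof -
    let ?S = "fst (U M)" let ?v = "pi_g (fst (U M)) (snd (U M))"
    have "rch M (fst (proc_status E M pi_g d (Suc i))) = rch M (?S \<union> {?v})"
      unfolding proc_Suc U_def by (rule rch_between[OF seed_fst(1) seed_fst(2)])
    then show ?thesis unfolding Z_def Delta_inf_def reach_inf_rch U_def by simp
  qed
  have "F_val E p pi_g (Suc i) d - F_val E p pi_g i d = (\<Sum>M\<in>Pow E. W p E M * Z (U M) M)"
    unfolding F_val_eq sum_subtractf[symmetric] using step by (intro sum.cong refl) (simp add: algebra_simps)
  also have "\<dots> = (\<Sum>M\<in>Pow E. W p E M * (\<Sum>m\<in>Pow (E - obs (U M)). W p (E - obs (U M)) m * Z (U M) (M \<inter> obs (U M) \<union> m)))"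
  proof (rule tower[symmetric, OF finite])
    show "obs (U L) \<subseteq> E" if "L \<subseteq> E" for L using proc_sinv[of E L pi_g d i] unfolding U_def sinv_def obs_def by auto
    show "obs (U L') = obs (U L) \<and> U L' = U L" if "L' \<inter> obs (U L) = L \<inter> obs (U L)" for L L'
      using proc_local[of L' E L pi_g d i] that unfolding U_def by simp
  qed
  also have "\<dots> = (\<Sum>M\<in>Pow E. W p E M * max_gain E p (U M))"
  proof (intro sum.cong refl)
    fix M assume M: "M \<in> Pow E"
    have inv: "sinv E M (U M)" unfolding U_def by (rule proc_sinv)
    have "(\<Sum>m\<in>Pow (E - obs (U M)). W p (E - obs (U M)) m * Z (U M) (M \<inter> obs (U M) \<union> m))
        = Delta_f_inf E p (fst (U M)) {pi_g (fst (U M)) (snd (U M))} (snd (U M))"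
      unfolding Dfi_eq[OF finite inv] Z_def by simp
    also have "\<dots> = max_gain E p (fst (U M), snd (U M))" using greedy unfolding is_greedy_def by blast
    also have "\<dots> = max_gain E p (U M)" by simp
    finally show "W p E M * (\<Sum>m\<in>Pow (E - obs (U M)). W p (E - obs (U M)) m * Z (U M) (M \<inter> obs (U M) \<union> m)) = W p E M * max_gain E p (U M)"
      by simp
  qed
  finally show ?thesis unfolding U_def .
qed

lemma telescope:
  fixes M :: "('v::finite \<times> 'v) set"
  shows "real (card (rch M (S \<union> fst (proc_status E M pol d n)))) = real (card (rch M S))
     + (\<Sum>m<n. real (card (rch M {pol (fst (proc_status E M pol d m)) (snd (proc_status E M pol d m))}
                          - rch M (S \<union> fst (proc_status E M pol d m)))))"
proof (induction n)
  case 0 then show ?case by (simp add: proc_0)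
next
  case (Suc n)
  let ?Q = "proc_status E M pol d n"
  let ?t = "pol (fst ?Q) (snd ?Q)"
  let ?X = "rch M (S \<union> fst ?Q)"
  have "S \<union> fst ?Q \<union> {?t} \<subseteq> S \<union> fst (proc_status E M pol d (Suc n))"
    using seed_fst(1)[of ?Q pol E M d] unfolding proc_Suc by auto
  moreover have "S \<union> fst (proc_status E M pol d (Suc n)) \<subseteq> rch M (S \<union> fst ?Q \<union> {?t})"
  proof -
    have "fst (proc_status E M pol d (Suc n)) \<subseteq> rch M (fst ?Q \<union> {?t})"
      using seed_fst(2)[of E M pol d ?Q] unfolding proc_Suc by simp
    also have "\<dots> \<subseteq> rch M (S \<union> fst ?Q \<union> {?t})" by (rule rch_mono) auto
    finally show ?thesis using rch_incl[of "S \<union> fst ?Q \<union> {?t}" M] by auto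
  qed
  ultimately have "rch M (S \<union> fst (proc_status E M pol d (Suc n))) = rch M (S \<union> fst ?Q \<union> {?t})"
    by (rule rch_between)
  also have "\<dots> = ?X \<union> (rch M {?t} - ?X)" using rch_Un[of M "S \<union> fst ?Q" "{?t}"] by auto
  finally have "card (rch M (S \<union> fst (proc_status E M pol d (Suc n)))) = card ?X + card (rch M {?t} - ?X)"
    by (metis card_Un_disjoint finite Diff_disjoint)
  then show ?case using Suc by simp
qed



lemma G_bound:
  fixes E :: "('v::finite \<times> 'v) set"
  assumes p01: "\<forall>e\<in>E. 0 \<le> p e \<and> p e \<le> 1"
  shows "(\<Sum>M\<in>Pow E. W p E M * real (card (rch M {pi_s (fst (proc_status E M pi_s d m)) (snd (proc_status E M pi_s d m))}
             - rch M (fst (proc_status E M pi_g d i) \<union> fst (proc_status E M pi_s d m)))))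
       \<le> (\<Sum>M\<in>Pow E. W p E M * max_gain E p (run_to_end E M (proc_status E M pi_g d i)))"
proof -
  define U where "U M = proc_status E M pi_g d i" for M
  define Q where "Q M = proc_status E M pi_s d m" for M
  define t where "t M = pi_s (fst (Q M)) (snd (Q M))" for M
  define X where "X M = rch M (fst (U M) \<union> fst (Q M))" for M
  define Z where "Z c M' = real (card (rch (M' - EdX E (snd c)) {fst c} - snd c))" for c :: "'v \<times> 'v set" and M'
  have Wn: "0 \<le> W p E M" if "M \<in> Pow E" for M using W_nonneg p01 that by auto
  have "(\<Sum>M\<in>Pow E. W p E M * real (card (rch M {t M} - X M))) = (\<Sum>M\<in>Pow E. W p E M * Z (t M, X M) M)"
  proof (intro sum.cong refl)
    fix M assume M: "M \<in> Pow E"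
    have "rch M {t M} - X M = rch {e \<in> M. fst e \<notin> X M} {t M} - X M"
      unfolding X_def by (rule rch_avoid[OF rch_is_closed])
    also have "{e \<in> M. fst e \<notin> X M} = M - EdX E (X M)" unfolding EdX_def using M by blast
    finally show "W p E M * real (card (rch M {t M} - X M)) = W p E M * Z (t M, X M) M" unfolding Z_def by simp
  qed
  also have "\<dots> = (\<Sum>M\<in>Pow E. W p E M * (\<Sum>m\<in>Pow (E - EdX E (X M)). W p (E - EdX E (X M)) m * Z (t M, X M) (M \<inter> EdX E (X M) \<union> m)))"
  proof (rule tower[symmetric, OF finite, where c = "\<lambda>M. (t M, X M)"])
    show "EdX E (X L) \<subseteq> E" for L by (auto simp: EdX_def)
    fix L L' assume L: "L \<subseteq> E" and L': "L' \<subseteq> E" and agree: "L' \<inter> EdX E (X L) = L \<inter> EdX E (X L)"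
    have ag: "e \<in> L \<longleftrightarrow> e \<in> L'" if "fst e \<in> X L" for e
      using agree that L L' unfolding EdX_def by blast
    have "obs (U L) \<subseteq> {e \<in> E. fst e \<in> fst (U L)}" unfolding U_def by (rule sinv_obsE[OF proc_sinv])
    moreover have "fst (U L) \<subseteq> X L" using rch_incl[of "fst (U L) \<union> fst (Q L)" L] unfolding X_def by (simp only: Un_subset_iff)
    ultimately have "L' \<inter> obs (U L) = L \<inter> obs (U L)" using ag by blast
    then have eU: "U L' = U L" unfolding U_def by (rule proc_local)
    have "obs (Q L) \<subseteq> {e \<in> E. fst e \<in> fst (Q L)}" unfolding Q_def by (rule sinv_obsE[OF proc_sinv])
    moreover have "fst (Q L) \<subseteq> X L" using rch_incl[of "fst (U L) \<union> fst (Q L)" L] unfolding X_def by (simp only: Un_subset_iff)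
    ultimately have "L' \<inter> obs (Q L) = L \<inter> obs (Q L)" using ag by blast
    then have eQ: "Q L' = Q L" unfolding Q_def by (rule proc_local)
    have eX: "X L' = X L" unfolding X_def eU eQ by (rule rch_local) (use ag in \<open>simp add: X_def\<close>)
    show "EdX E (X L') = EdX E (X L) \<and> (t L', X L') = (t L, X L)" using eX eQ unfolding t_def by simp
  qed
  also have "\<dots> = (\<Sum>M\<in>Pow E. W p E M * hh E p (t M) (X M))"
  proof (intro sum.cong refl)
    fix M assume M: "M \<in> Pow E"
    have "(\<Sum>m\<in>Pow (E - EdX E (X M)). W p (E - EdX E (X M)) m * Z (t M, X M) (M \<inter> EdX E (X M) \<union> m))
        = (\<Sum>m\<in>Pow (E - EdX E (X M)). W p (E - EdX E (X M)) m * real (card (rch m {t M} - X M)))"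
    proof (intro sum.cong refl)
      fix m assume "m \<in> Pow (E - EdX E (X M))"
      then have "(M \<inter> EdX E (X M) \<union> m) - EdX E (X M) = m" by auto
      then show "W p (E - EdX E (X M)) m * Z (t M, X M) (M \<inter> EdX E (X M) \<union> m) = W p (E - EdX E (X M)) m * real (card (rch m {t M} - X M))"
        unfolding Z_def by simp
    qed
    then show "W p E M * (\<Sum>m\<in>Pow (E - EdX E (X M)). W p (E - EdX E (X M)) m * Z (t M, X M) (M \<inter> EdX E (X M) \<union> m)) = W p E M * hh E p (t M) (X M)"
      unfolding hh_alt[OF finite] by simp
  qed
  also have "\<dots> \<le> (\<Sum>M\<in>Pow E. W p E M * hh E p (t M) (rch M (fst (U M))))"
  proof (rule sum_mono)
    fix M assume M: "M \<in> Pow E"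
    have "rch M (fst (U M)) \<subseteq> X M" unfolding X_def by (rule rch_mono[OF Un_upper1 order_refl])
    then show "W p E M * hh E p (t M) (X M) \<le> W p E M * hh E p (t M) (rch M (fst (U M)))"
      using hh_anti[OF p01] Wn[OF M] by (simp add: mult_left_mono)
  qed
  also have "\<dots> \<le> (\<Sum>M\<in>Pow E. W p E M * Hmax E p (rch M (fst (U M))))"
  proof (rule sum_mono)
    fix M assume M: "M \<in> Pow E"
    have "hh E p (t M) (rch M (fst (U M))) \<le> Hmax E p (rch M (fst (U M)))"
      unfolding Hmax_def by (rule Max_ge[OF _ rangeI]) simp
    then show "W p E M * hh E p (t M) (rch M (fst (U M))) \<le> W p E M * Hmax E p (rch M (fst (U M)))"
      using Wn[OF M] by (simp add: mult_left_mono)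
  qed
  also have "\<dots> = (\<Sum>M\<in>Pow E. W p E M * max_gain E p (run_to_end E M (U M)))"
  proof (intro sum.cong refl)
    fix M assume M: "M \<in> Pow E"
    show "W p E M * Hmax E p (rch M (fst (U M))) = W p E M * max_gain E p (run_to_end E M (U M))"
      using mg_run[OF proc_sinv[of E M pi_g d i], where p=p] M unfolding U_def by simp
  qed
  finally show ?thesis unfolding U_def Q_def t_def X_def .
qed

definition Num :: "'v::finite edge set \<Rightarrow> ('v edge \<Rightarrow> real) \<Rightarrow> 'v status \<Rightarrow> real" where
  "Num E p U = (\<Sum>U'\<in>final_statuses E U. cond_prob p (snd U') (snd U) * max_gain E p U')"

lemma N_eq:
  fixes E :: "('v::finite \<times> 'v) set"
  shows "(\<Sum>M\<in>Pow E. W p E M * max_gain E p (run_to_end E M (proc_status E M pol d i)))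
       = (\<Sum>M\<in>Pow E. W p E M * Num E p (proc_status E M pol d i))"
proof -
  define U where "U M = proc_status E M pol d i" for M
  define Z where "Z V M' = max_gain E p (run_to_end E M' V)" for V :: "'v status" and M'
  have "(\<Sum>M\<in>Pow E. W p E M * Z (U M) M) = (\<Sum>M\<in>Pow E. W p E M * (\<Sum>m\<in>Pow (E - obs (U M)). W p (E - obs (U M)) m * Z (U M) (M \<inter> obs (U M) \<union> m)))"
  proof (rule tower[symmetric, OF finite])
    show "obs (U L) \<subseteq> E" if "L \<subseteq> E" for L using proc_sinv[of E L pol d i] unfolding U_def sinv_def obs_def by auto
    show "obs (U L') = obs (U L) \<and> U L' = U L" if "L' \<inter> obs (U L) = L \<inter> obs (U L)" for L L'
      using proc_local[of L' E L pol d i] that unfolding U_def by simp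
  qed
  also have "\<dots> = (\<Sum>M\<in>Pow E. W p E M * Num E p (U M))"
  proof (intro sum.cong refl)
    fix M assume M: "M \<in> Pow E"
    have inv: "sinv E M (U M)" unfolding U_def by (rule proc_sinv)
    have sy: "snd (U M) = (M \<inter> obs (U M), obs (U M) - (M \<inter> obs (U M)))" using sinv_snd[OF inv] by auto
    have oE: "obs (U M) \<subseteq> E" using inv unfolding sinv_def obs_def by auto
    have "(\<Sum>m\<in>Pow (E - obs (U M)). W p (E - obs (U M)) m * Z (U M) (M \<inter> obs (U M) \<union> m))
        = (\<Sum>psi\<in>{psi \<in> full_realizations E. prec (snd (U M)) psi}. cond_prob p psi (snd (U M)) * max_gain E p (run_to_end E (fst psi) (U M)))"
      unfolding Z_def sy using cond_sum[OF finite oE, of "M \<inter> obs (U M)" p "\<lambda>psi. max_gain E p (run_to_end E (fst psi) (U M))"] by simp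
    also have "\<dots> = Num E p (U M)" unfolding Num_def by (rule group_final[OF inv, symmetric])
    finally show "W p E M * (\<Sum>m\<in>Pow (E - obs (U M)). W p (E - obs (U M)) m * Z (U M) (M \<inter> obs (U M) \<union> m)) = W p E M * Num E p (U M)"
      by simp
  qed
  finally show ?thesis unfolding U_def Z_def .
qed



lemma Delta_inf_nonneg: "0 \<le> Delta_inf S Vs (psi :: 'v::finite realization)"
proof -
  have "rch (fst psi) S \<subseteq> rch (fst psi) (S \<union> Vs)" by (rule rch_mono) auto
  then have "card (rch (fst psi) S) \<le> card (rch (fst psi) (S \<union> Vs))" by (simp add: card_mono)
  then show ?thesis unfolding Delta_inf_def reach_inf_rch by simp
qed

lemma Dfi_nonneg:
  fixes E :: "('v::finite \<times> 'v) set"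
  assumes p01: "\<forall>e\<in>E. 0 \<le> p e \<and> p e \<le> 1"
  shows "0 \<le> Delta_f_inf E p S Vs phi"
  unfolding Delta_f_inf_def
  by (intro sum_nonneg mult_nonneg_nonneg cond_nonneg[OF p01] Delta_inf_nonneg) auto

lemma mg_ge:
  fixes E :: "('v::finite \<times> 'v) set"
  shows "Delta_f_inf E p (fst U) {v} (snd U) \<le> max_gain E p U"
  unfolding max_gain_def by (rule Max_ge[OF _ rangeI]) simp

lemma mg_nonneg:
  fixes E :: "('v::finite \<times> 'v) set"
  assumes p01: "\<forall>e\<in>E. 0 \<le> p e \<and> p e \<le> 1"
  shows "0 \<le> max_gain E p U"
  using Dfi_nonneg[OF p01] mg_ge by (rule order_trans)

lemma Num_zero:
  fixes E :: "('v::finite \<times> 'v) set"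
  assumes p01: "\<forall>e\<in>E. 0 \<le> p e \<and> p e \<le> 1" and inv: "sinv E Lt U" and z: "max_gain E p U = 0"
  shows "Num E p U = 0"
proof -
  define A where "A = {psi \<in> full_realizations E. prec (snd U) psi}"
  have "Num E p U = (\<Sum>psi\<in>A. cond_prob p psi (snd U) * max_gain E p (run_to_end E (fst psi) U))"
    unfolding Num_def A_def by (rule group_final[OF inv])
  also have "\<dots> = (\<Sum>psi\<in>A. 0)"
  proof (intro sum.cong refl)
    fix psi assume psiA: "psi \<in> A"
    have h: "fst psi \<subseteq> E" "snd psi = E - fst psi" "fst (snd U) \<subseteq> fst psi" "snd (snd U) \<subseteq> snd psi"
      using psiA unfolding A_def full_iff prec_def by auto
    have invp: "sinv E (fst psi) U" using h by (intro sinv_change[OF inv]) auto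
    have cn: "0 \<le> cond_prob p psi (snd U)" using psiA cond_nonneg[OF p01] unfolding A_def by auto
    show "cond_prob p psi (snd U) * max_gain E p (run_to_end E (fst psi) U) = 0"
    proof (cases "cond_prob p psi (snd U) = 0")
      case False
      then have cp: "0 < cond_prob p psi (snd U)" using cn by simp
      have all: "v \<in> rch (fst psi) (fst U)" for v
      proof -
        have "cond_prob p psi (snd U) * Delta_inf (fst U) {v} psi \<le> Delta_f_inf E p (fst U) {v} (snd U)"
          unfolding Delta_f_inf_def A_def[symmetric]
        proof (rule member_le_sum[OF psiA])
          show "finite A" by simp
        next
          fix x assume "x \<in> A - {psi}"
          then have "x \<in> full_realizations E" by (simp add: A_def)
          then show "0 \<le> cond_prob p x (snd U) * Delta_inf (fst U) {v} x"
            by (intro mult_nonneg_nonneg cond_nonneg[OF p01] Delta_inf_nonneg)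
        qed
        also have "\<dots> \<le> 0" using mg_ge[of E p U v] z by simp
        finally have "Delta_inf (fst U) {v} psi \<le> 0" using cp by (simp add: mult_le_0_iff)
        then have le: "card (rch (fst psi) (fst U \<union> {v})) \<le> card (rch (fst psi) (fst U))"
          unfolding Delta_inf_def reach_inf_rch by simp
        have sub: "rch (fst psi) (fst U) \<subseteq> rch (fst psi) (fst U \<union> {v})" by (rule rch_mono) auto
        have "rch (fst psi) (fst U) = rch (fst psi) (fst U \<union> {v})" by (rule card_seteq[OF finite sub le])
        moreover have "v \<in> rch (fst psi) (fst U \<union> {v})" using rch_incl[of "fst U \<union> {v}" "fst psi"] by blast
        ultimately show ?thesis by simp
      qed
      then have "rch (fst psi) (fst U) = UNIV" by blast
      then have "max_gain E p (run_to_end E (fst psi) U) = 0"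
        using mg_run[OF invp h(1), of p] Hmax_UNIV by simp
      then show ?thesis by simp
    qed simp
  qed
  finally show ?thesis by simp
qed

lemma rp_W: "real_prob p (M, E - M) = W p E M"
  unfolding real_prob_def cond_prob_def W_def by simp

lemma tree_mem:
  assumes "M \<subseteq> E" "0 < W p E M" "i < k"
  shows "proc_status E M pol d i \<in> tree_statuses E p pol k d"
  unfolding tree_statuses_def
proof -
  have "(M, E - M) \<in> full_realizations E" "0 < real_prob p (M, E - M)" using assms rp_W[of p M E] by (auto simp: full_iff)
  then show "proc_status E M pol d i \<in> {proc_status E (fst psi) pol d i |psi i. psi \<in> full_realizations E \<and> 0 < real_prob p psi \<and> i < k}"
    using assms(3) by force
qed

lemma Num_le:
  fixes E :: "('v::finite \<times> 'v) set"
  assumes p01: "\<forall>e\<in>E. 0 \<le> p e \<and> p e \<le> 1" and M: "M \<subseteq> E" and W: "0 < W p E M" and i: "i < k"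
  shows "Num E p (proc_status E M pol d i) \<le> alpha_tree E p pol k d * max_gain E p (proc_status E M pol d i)"
proof -
  let ?U = "proc_status E M pol d i"
  have mem: "?U \<in> tree_statuses E p pol k d" by (rule tree_mem[OF M W i])
  have al: "alpha_inf E p ?U \<le> alpha_tree E p pol k d"
    unfolding alpha_tree_def by (rule Max_ge) (use mem in auto)
  show ?thesis
  proof (cases "max_gain E p ?U = 0")
    case True
    then show ?thesis using Num_zero[OF p01 proc_sinv True] by simp
  next
    case False
    then have pos: "0 < max_gain E p ?U" using mg_nonneg[OF p01, of ?U] by simp
    have "alpha_inf E p ?U = Num E p ?U / max_gain E p ?U" unfolding alpha_inf_def Num_def ..
    then have "Num E p ?U = alpha_inf E p ?U * max_gain E p ?U" using pos by simp
    also have "\<dots> \<le> alpha_tree E p pol k d * max_gain E p ?U" using al pos by (simp add: mult_right_mono)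
    finally show ?thesis .
  qed
qed

lemma run_empty: "run_to_end E Lt ({}, ({}, {})) = ({}, ({}, {}))"
proof -
  have "(diff_round E Lt ^^ n) ({}, ({}, {})) = ({}, ({}, {}))" for n
    by (induction n) (simp_all add: dr_empty)
  then show ?thesis unfolding run_to_end_def by blast
qed

lemma alpha_ge1:
  fixes E :: "('v::finite \<times> 'v) set"
  assumes pp: "\<forall>e\<in>E. 0 < p e \<and> p e \<le> 1" and k: "0 < k"
  shows "1 \<le> alpha_tree E p pol k d"
proof -
  have p01: "\<forall>e\<in>E. 0 \<le> p e \<and> p e \<le> 1" using pp by auto
  let ?U0 = "({}, ({}, {})) :: 'v status"
  have WE: "0 < W p E E" unfolding W_def using pp by (simp add: prod_pos)
  have mem: "?U0 \<in> tree_statuses E p pol k d" using tree_mem[OF order_refl WE k, of pol d] by (simp add: proc_0)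
  have fs: "final_statuses E ?U0 = {?U0}"
    unfolding final_statuses_def run_empty
    by (auto simp: full_iff prec_def intro!: exI[of _ "(E, {})"])
  have inv0: "sinv E E ?U0" by (simp add: sinv_def obs_def)
  have mgpos: "1 \<le> max_gain E p ?U0"
  proof -
    fix v :: 'v
    have "Delta_f_inf E p {} {v} ({}, {}) = (\<Sum>m\<in>Pow E. W p E m * Delta_inf {} {v} (m, E - m))"
      using Dfi_eq[OF finite inv0, of p "{}" "{v}"] by (simp add: obs_def)
    also have "\<dots> \<ge> (\<Sum>m\<in>Pow E. W p E m * 1)"
    proof (rule sum_mono)
      fix m assume m: "m \<in> Pow E"
      have "v \<in> rch m {v}" using rch_incl[of "{v}" m] by blast
      then have "1 \<le> card (rch m {v})" by (simp add: card_gt_0_iff Suc_le_eq) (auto)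
      then have "1 \<le> Delta_inf {} {v} (m, E - m)" unfolding Delta_inf_def reach_inf_rch by (simp add: rch_def)
      then show "W p E m * 1 \<le> W p E m * Delta_inf {} {v} (m, E - m)"
        using W_nonneg[OF p01] m by (intro mult_left_mono) auto
    qed
    finally have "1 \<le> Delta_f_inf E p {} {v} ({}, {})" using W_sum1[of E p] by simp
    also have "\<dots> \<le> max_gain E p ?U0" using mg_ge[of E p ?U0 v] by simp
    finally show ?thesis .
  qed
  have "alpha_inf E p ?U0 = 1"
    unfolding alpha_inf_def fs using mgpos by (simp add: cond_prob_def)
  moreover have "alpha_inf E p ?U0 \<le> alpha_tree E p pol k d"
    unfolding alpha_tree_def by (rule Max_ge) (use mem in auto)
  ultimately show ?thesis by simp
qed



lemma step_bound:
  fixes E :: "('v::finite \<times> 'v) set"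
  assumes p01: "\<forall>e\<in>E. 0 \<le> p e \<and> p e \<le> 1" and greedy: "is_greedy E p pi_g" and i: "i < k"
  shows "F_val E p pi_s k d \<le> F_val E p pi_g i d
           + real k * alpha_tree E p pi_g k d * (F_val E p pi_g (Suc i) d - F_val E p pi_g i d)"
proof -
  define S where "S M = fst (proc_status E M pi_g d i)" for M
  define g where "g m M = real (card (rch M {pi_s (fst (proc_status E M pi_s d m)) (snd (proc_status E M pi_s d m))}
             - rch M (fst (proc_status E M pi_g d i) \<union> fst (proc_status E M pi_s d m))))" for m M
  define B where "B = (\<Sum>M\<in>Pow E. W p E M * max_gain E p (run_to_end E M (proc_status E M pi_g d i)))"
  let ?al = "alpha_tree E p pi_g k d"
  have Wn: "0 \<le> W p E M" if "M \<in> Pow E" for M using W_nonneg p01 that by auto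
  have "F_val E p pi_s k d = (\<Sum>M\<in>Pow E. W p E M * real (card (rch M (fst (proc_status E M pi_s d k)))))"
    by (rule F_val_eq)
  also have "\<dots> \<le> (\<Sum>M\<in>Pow E. W p E M * real (card (rch M (S M \<union> fst (proc_status E M pi_s d k)))))"
  proof (rule sum_mono)
    fix M assume M: "M \<in> Pow E"
    have "rch M (fst (proc_status E M pi_s d k)) \<subseteq> rch M (S M \<union> fst (proc_status E M pi_s d k))"
      by (rule rch_mono[OF Un_upper2 order_refl])
    then have "card (rch M (fst (proc_status E M pi_s d k))) \<le> card (rch M (S M \<union> fst (proc_status E M pi_s d k)))"
      by (simp add: card_mono)
    then show "W p E M * real (card (rch M (fst (proc_status E M pi_s d k)))) \<le> W p E M * real (card (rch M (S M \<union> fst (proc_status E M pi_s d k))))"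
      using Wn[OF M] by (simp add: mult_left_mono)
  qed
  also have "\<dots> = (\<Sum>M\<in>Pow E. W p E M * (real (card (rch M (S M))) + (\<Sum>m<k. g m M)))"
    unfolding g_def S_def by (intro sum.cong refl) (simp only: telescope)
  also have "\<dots> = F_val E p pi_g i d + (\<Sum>m<k. \<Sum>M\<in>Pow E. W p E M * g m M)"
    unfolding F_val_eq[of E p pi_g i d] S_def
    by (simp add: distrib_left sum.distrib sum_distrib_left sum.swap[of _ "{..<k}"])
  also have "\<dots> \<le> F_val E p pi_g i d + (\<Sum>m<k. B)"
    apply (rule add_left_mono)
    apply (rule sum_mono)
    unfolding g_def B_def by (rule G_bound[OF p01])
  also have "(\<Sum>m<k. B) = real k * B" by simp
  also have "B = (\<Sum>M\<in>Pow E. W p E M * Num E p (proc_status E M pi_g d i))" unfolding B_def by (rule N_eq)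
  also have "\<dots> \<le> (\<Sum>M\<in>Pow E. W p E M * (?al * max_gain E p (proc_status E M pi_g d i)))"
  proof (rule sum_mono)
    fix M assume M: "M \<in> Pow E"
    show "W p E M * Num E p (proc_status E M pi_g d i) \<le> W p E M * (?al * max_gain E p (proc_status E M pi_g d i))"
    proof (cases "W p E M = 0")
      case False
      then have "0 < W p E M" using Wn[OF M] by simp
      then show ?thesis using Num_le[OF p01 _ _ i, of M pi_g d] M by (simp add: mult_left_mono)
    qed simp
  qed
  also have "\<dots> = ?al * (F_val E p pi_g (Suc i) d - F_val E p pi_g i d)"
    unfolding gain_step[OF greedy] by (simp add: sum_distrib_left algebra_simps)
  finally show ?thesis
    by (simp add: algebra_simps mult_right_mono)
qed



theorem theorem1:
  fixes E :: "('v::finite \<times> 'v) set" and p :: "'v \<times> 'v \<Rightarrow> real"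
    and k d :: nat and pi_g pi_s :: "'v policy"
  assumes "\<forall>e\<in>E. 0 < p e \<and> p e \<le> 1"
    and "k > 0" and "d > 0"
    and "is_greedy E p pi_g"
  shows "F_val E p pi_g k d \<ge> (1 - exp (- 1 / alpha_tree E p pi_g k d)) * F_val E p pi_s k d"
proof -
  have p01: "\<forall>e\<in>E. 0 \<le> p e \<and> p e \<le> 1" using assms(1) by auto
  define al where "al = alpha_tree E p pi_g k d"
  define a where "a i = F_val E p pi_g i d" for i
  define OPT where "OPT = F_val E p pi_s k d"
  define c where "c = 1 - 1 / (real k * al)"
  have al1: "1 \<le> al" unfolding al_def by (rule alpha_ge1[OF assms(1,2)])
  have k1: "1 \<le> real k" using assms(2) by simp
  have ka: "1 \<le> real k * al" using al1 k1 by (metis mult_mono' mult_1 zero_le_one)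
  have kapos: "0 < real k * al" using ka by simp
  have a0: "a 0 = 0" unfolding a_def F_val_eq proc_0 by (simp add: rch_def)
  have OPT0: "0 \<le> OPT" unfolding OPT_def F_val_eq
    using W_nonneg[OF p01] by (intro sum_nonneg mult_nonneg_nonneg) auto
  have step: "OPT - a (Suc i) \<le> c * (OPT - a i)" if i: "i < k" for i
  proof -
    have b: "OPT \<le> a i + real k * al * (a (Suc i) - a i)"
      unfolding OPT_def a_def al_def by (rule step_bound[OF p01 assms(4) i])
    then have "OPT - a i \<le> (a (Suc i) - a i) * (real k * al)" by (simp add: algebra_simps)
    then have "(OPT - a i) / (real k * al) \<le> a (Suc i) - a i"
      using kapos by (simp only: divide_le_eq) simp
    then have "OPT - a (Suc i) \<le> (OPT - a i) - (OPT - a i) / (real k * al)" by simp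
    also have "\<dots> = c * (OPT - a i)" unfolding c_def by (simp add: algebra_simps)
    finally show ?thesis .
  qed
  have c0: "0 \<le> c" unfolding c_def using ka by (simp add: field_simps)
  have ind: "i \<le> k \<Longrightarrow> OPT - a i \<le> c ^ i * OPT" for i
  proof (induction i)
    case 0 then show ?case using a0 by simp
  next
    case (Suc i)
    then have "OPT - a (Suc i) \<le> c * (OPT - a i)" using step by simp
    also have "\<dots> \<le> c * (c ^ i * OPT)" using Suc c0 by (intro mult_left_mono) auto
    finally show ?case by simp
  qed
  have cexp: "c \<le> exp (- 1 / (real k * al))"
    unfolding c_def using exp_ge_add_one_self[of "- 1 / (real k * al)"] by simp
  have "c ^ k \<le> exp (- 1 / (real k * al)) ^ k" by (rule power_mono[OF cexp c0])
  also have "\<dots> = exp (real k * (- 1 / (real k * al)))" by (rule exp_of_nat_mult[symmetric])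
  also have "real k * (- 1 / (real k * al)) = - 1 / al" using k1 by (simp add: field_simps)
  finally have ck: "c ^ k \<le> exp (- 1 / al)" .
  have "OPT - a k \<le> c ^ k * OPT" using ind by simp
  also have "\<dots> \<le> exp (- 1 / al) * OPT" using ck OPT0 by (rule mult_right_mono)
  finally have "(1 - exp (- 1 / al)) * OPT \<le> a k" by (simp add: algebra_simps)
  then show ?thesis unfolding al_def a_def OPT_def .
qed

end
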